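(* Let $G=\mathrm{Cay}(\Gamma,S)$ be a Cayley graph, let $h\in S$ be an involution such that $H:=\langle h\rangle$ is normal in $\Gamma$, and let $r\ge2$. If $\{\mathbb{I},h\}$ is an $(r+2)$-local $2$-separator of $G$, then the vertex $\{\mathbb{I},h\}$ is an $r$-local cutvertex of $G/h$.
   Context: Generating sets exclude the identity $\mathbb{I}$ and are closed under inverses; $\mathrm{Cay}(\Gamma,S)$ is the simple graph on $\Gamma$ with edges $\{g,gs\}$. $G/h$ is the simple graph obtained from $G$ by contracting all edges labelled $h$ (i.e. the edges $\{g,gh\}$) and identifying parallel edges: its vertices are the cosets $gH=\{g,gh\}$, and two distinct cosets are adjacent iff some element of one is adjacent in $G$ to some element of the other. Ball $B_r(v)$: subgraph of all vertices and edges on closed walks of length $\le r$ through $v$; $v$ is an $r$-local cutvertex if $B_r(v)-v$ is disconnected. For $X=\{v_0,v_1\}$, $N(X)$ is the set of vertices outside $X$ adjacent to $X$; the connectivity graph $C_r(v_0,v_1)$ has vertex set $N(X)$, $a,b$ adjacent if for some $i$ they lie in the same component of $B_r(v_i)-v_0-v_1$; $X$ is an $r$-local $2$-separator if $C_r(v_0,v_1)$ is disconnected and $d_G(v_0,v_1)\le r/2$. *)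

theory Defs
  imports "HOL-Algebra.Coset" "HOL-Algebra.Generated_Groups"
begin

type_synonym 'v graph = "'v set \<times> 'v set set"

definition verts :: "'v graph \<Rightarrow> 'v set" where
  "verts G = fst G"

definition edges :: "'v graph \<Rightarrow> 'v set set" where
  "edges G = snd G"

definition adj :: "'v graph \<Rightarrow> 'v \<Rightarrow> 'v \<Rightarrow> bool" where
  "adj G a b \<longleftrightarrow> a \<in> verts G \<and> b \<in> verts G \<and> a \<noteq> b \<and> {a, b} \<in> edges G"

text \<open>A walk is a nonempty list of vertices, consecutive ones adjacent;
  its length is the number of edges, i.e. length p - 1.\<close>
definition walk :: "'v graph \<Rightarrow> 'v list \<Rightarrow> bool" where
  "walk G p \<longleftrightarrow> p \<noteq> [] \<and> set p \<subseteq> verts G \<and>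
     (\<forall>i. Suc i < length p \<longrightarrow> adj G (p ! i) (p ! Suc i))"

definition closed_walk_through :: "'v graph \<Rightarrow> nat \<Rightarrow> 'v \<Rightarrow> 'v list \<Rightarrow> bool" where
  "closed_walk_through G r v p \<longleftrightarrow>
     walk G p \<and> hd p = last p \<and> v \<in> set p \<and> length p - 1 \<le> r"

definition walk_edges :: "'v list \<Rightarrow> 'v set set" where
  "walk_edges p = {{p ! i, p ! Suc i} | i. Suc i < length p}"

definition ball :: "'v graph \<Rightarrow> nat \<Rightarrow> 'v \<Rightarrow> 'v graph" where
  "ball G r v =
     ({x. \<exists>p. closed_walk_through G r v p \<and> x \<in> set p},
      {e. \<exists>p. closed_walk_through G r v p \<and> e \<in> walk_edges p})"

definition delete_verts :: "'v graph \<Rightarrow> 'v set \<Rightarrow> 'v graph" where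
  "delete_verts G X = (verts G - X, {e \<in> edges G. (\<forall>x\<in>X. x \<notin> e)})"

definition same_component :: "'v graph \<Rightarrow> 'v \<Rightarrow> 'v \<Rightarrow> bool" where
  "same_component G a b \<longleftrightarrow> a \<in> verts G \<and> b \<in> verts G \<and> (adj G)\<^sup>*\<^sup>* a b"

definition disconnected :: "'v graph \<Rightarrow> bool" where
  "disconnected G \<longleftrightarrow> (\<exists>a\<in>verts G. \<exists>b\<in>verts G. \<not> same_component G a b)"

definition local_cutvertex :: "'v graph \<Rightarrow> nat \<Rightarrow> 'v \<Rightarrow> bool" where
  "local_cutvertex G r v \<longleftrightarrow> v \<in> verts G \<and> disconnected (delete_verts (ball G r v) {v})"

definition nbhd :: "'v graph \<Rightarrow> 'v set \<Rightarrow> 'v set" where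
  "nbhd G X = {u \<in> verts G - X. \<exists>x\<in>X. adj G x u}"

definition connectivity_graph :: "'v graph \<Rightarrow> nat \<Rightarrow> 'v \<Rightarrow> 'v \<Rightarrow> 'v graph" where
  "connectivity_graph G r v0 v1 =
     (nbhd G {v0, v1},
      {{a, b} | a b. a \<in> nbhd G {v0, v1} \<and> b \<in> nbhd G {v0, v1} \<and> a \<noteq> b \<and>
         (\<exists>v\<in>{v0, v1}. same_component (delete_verts (ball G r v) {v0, v1}) a b)})"

definition graph_dist_le :: "'v graph \<Rightarrow> 'v \<Rightarrow> 'v \<Rightarrow> nat \<Rightarrow> bool" where
  "graph_dist_le G a b k \<longleftrightarrow> (\<exists>p. walk G p \<and> hd p = a \<and> last p = b \<and> length p - 1 \<le> k)"

text \<open>{v0,v1} is an r-local 2-separator; d(v0,v1) \<le> r/2 is written 2 d \<le> r.\<close>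
definition local_2_separator :: "'v graph \<Rightarrow> nat \<Rightarrow> 'v \<Rightarrow> 'v \<Rightarrow> bool" where
  "local_2_separator G r v0 v1 \<longleftrightarrow>
     v0 \<in> verts G \<and> v1 \<in> verts G \<and> v0 \<noteq> v1 \<and>
     disconnected (connectivity_graph G r v0 v1) \<and>
     (\<exists>d. 2 * d \<le> r \<and> graph_dist_le G v0 v1 d)"

definition cayley_graph :: "('a, 'b) monoid_scheme \<Rightarrow> 'a set \<Rightarrow> 'a graph" where
  "cayley_graph \<Gamma> S =
     (carrier \<Gamma>, {{g, g \<otimes>\<^bsub>\<Gamma>\<^esub> s} | g s. g \<in> carrier \<Gamma> \<and> s \<in> S})"

definition is_generating_set :: "('a, 'b) monoid_scheme \<Rightarrow> 'a set \<Rightarrow> bool" where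
  "is_generating_set \<Gamma> S \<longleftrightarrow> S \<subseteq> carrier \<Gamma> \<and> generate \<Gamma> S = carrier \<Gamma> \<and>
     \<one>\<^bsub>\<Gamma>\<^esub> \<notin> S \<and> (\<forall>s\<in>S. inv\<^bsub>\<Gamma>\<^esub> s \<in> S)"

definition contract_h :: "('a, 'b) monoid_scheme \<Rightarrow> 'a set \<Rightarrow> 'a \<Rightarrow> 'a set graph" where
  "contract_h \<Gamma> S h =
     (let V = {{g, g \<otimes>\<^bsub>\<Gamma>\<^esub> h} | g. g \<in> carrier \<Gamma>} in
      (V, {{A, B} | A B. A \<in> V \<and> B \<in> V \<and> A \<noteq> B \<and>
            (\<exists>a\<in>A. \<exists>b\<in>B. adj (cayley_graph \<Gamma> S) a b)}))"

end

theory Submission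
  imports Defs
begin


lemma adj_sym: "adj G a b \<Longrightarrow> adj G b a"
  unfolding adj_def by (auto simp: insert_commute)

lemma walk_single: "walk G [x] \<longleftrightarrow> x \<in> verts G"
  unfolding walk_def by auto

lemma walk_Cons_Cons: "walk G (x # y # xs) \<longleftrightarrow> adj G x y \<and> walk G (y # xs)"
proof
  assume w: "walk G (x # y # xs)"
  then have "\<forall>i. Suc i < length (x # y # xs) \<longrightarrow> adj G ((x # y # xs) ! i) ((x # y # xs) ! Suc i)"
    unfolding walk_def by blast
  then have "adj G x y" by (drule_tac spec[of _ 0]) simp
  moreover have "walk G (y # xs)" unfolding walk_def
  proof (intro conjI allI impI)
    fix i assume "Suc i < length (y # xs)"
    then have "Suc (Suc i) < length (x # y # xs)" by simp
    with w have "adj G ((x # y # xs) ! Suc i) ((x # y # xs) ! Suc (Suc i))" unfolding walk_def by blast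
    then show "adj G ((y # xs) ! i) ((y # xs) ! Suc i)" by simp
  qed (use w in \<open>auto simp: walk_def\<close>)
  ultimately show "adj G x y \<and> walk G (y # xs)" by blast
next
  assume a: "adj G x y \<and> walk G (y # xs)"
  show "walk G (x # y # xs)" unfolding walk_def
  proof (intro conjI allI impI)
    fix i assume i: "Suc i < length (x # y # xs)"
    show "adj G ((x # y # xs) ! i) ((x # y # xs) ! Suc i)"
    proof (cases i)
      case 0 then show ?thesis using a by simp
    next
      case (Suc k)
      then have "Suc k < length (y # xs)" using i by simp
      then have "adj G ((y # xs) ! k) ((y # xs) ! Suc k)" using a unfolding walk_def by blast
      then show ?thesis using Suc by simp
    qed
  qed (use a in \<open>auto simp: walk_def adj_def\<close>)
qed

lemma walk_snoc:
  assumes "walk G p" "adj G (last p) y"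
  shows "walk G (p @ [y])"
  unfolding walk_def
proof (intro conjI allI impI)
  show "set (p @ [y]) \<subseteq> verts G" using assms unfolding walk_def adj_def by auto
next
  fix i assume i: "Suc i < length (p @ [y])"
  show "adj G ((p @ [y]) ! i) ((p @ [y]) ! Suc i)"
  proof (cases "Suc i < length p")
    case True
    then show ?thesis using assms(1) unfolding walk_def by (simp add: nth_append)
  next
    case False
    then have "i = length p - 1" "p \<noteq> []" using i assms(1) unfolding walk_def by auto
    then show ?thesis using assms(2) False by (simp add: nth_append last_conv_nth)
  qed
qed simp

lemma walk_map:
  assumes "walk G p" "\<And>x. x \<in> verts G \<Longrightarrow> f x \<in> verts G'"
    "\<And>a b. adj G a b \<Longrightarrow> adj G' (f a) (f b)"
  shows "walk G' (map f p)"
  using assms unfolding walk_def by auto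

lemma walk_edgesI: "Suc i < length p \<Longrightarrow> {p ! i, p ! Suc i} \<in> walk_edges p"
  unfolding walk_edges_def by blast

lemma rotate_cwt:
  assumes c: "closed_walk_through G r v P" and e: "e \<in> walk_edges P"
  shows "\<exists>P'. closed_walk_through G r v P' \<and> hd P' = v \<and> e \<in> walk_edges P'"
proof -
  have w: "walk G P" and hl: "hd P = last P" and vP: "v \<in> set P" and len: "length P - 1 \<le> r"
    using c unfolding closed_walk_through_def by auto
  have ne: "P \<noteq> []" using w unfolding walk_def by auto
  define n where "n = length P - 1"
  have lenP: "length P = Suc n" using ne n_def by (cases P) auto
  obtain m where m: "m \<le> n" "P ! m = v" using vP lenP by (metis in_set_conv_nth less_Suc_eq_le)
  have P0n: "P ! 0 = P ! n" using hl ne lenP by (simp add: hd_conv_nth last_conv_nth)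
  define f where "f j = (if j \<le> n - m then P ! (m + j) else P ! (j - (n - m)))" for j
  define P' where "P' = map f [0..<Suc n]"
  have lenP': "length P' = Suc n" by (simp add: P'_def)
  have nthP': "P' ! j = f j" if "j \<le> n" for j using that
    by (simp add: P'_def nth_map_upt less_Suc_eq_le del: upt_Suc)
  have adjP: "adj G (P ! k) (P ! Suc k)" if "k < n" for k
    using w that lenP unfolding walk_def by auto
  have walkP': "walk G P'" unfolding walk_def
  proof (intro conjI allI impI)
    show "P' \<noteq> []" using lenP' by auto
    show "set P' \<subseteq> verts G"
    proof
      fix x assume "x \<in> set P'"
      then obtain j where "j < Suc n" "x = f j" unfolding P'_def by (auto simp del: upt_Suc)
      then have "x \<in> set P" unfolding f_def using lenP m
        by (cases "j \<le> n - m") (simp_all add: nth_mem)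
      then show "x \<in> verts G" using w unfolding walk_def by auto
    qed
    fix j assume j: "Suc j < length P'"
    then have jn: "j < n" using lenP' by simp
    show "adj G (P' ! j) (P' ! Suc j)"
    proof (cases "Suc j \<le> n - m")
      case True
      then show ?thesis using jn nthP'[of j] nthP'[of "Suc j"] adjP[of "m + j"] unfolding f_def by simp
    next
      case False
      show ?thesis
      proof (cases "j = n - m")
        case True
        then have "0 < n" "m > 0" using jn by auto
        then show ?thesis using True jn nthP'[of j] nthP'[of "Suc j"] adjP[of 0] P0n m(1) unfolding f_def
          by (simp add: Suc_diff_le)
      next
        case F2: False
        then have "j > n - m" using False by simp
        then show ?thesis using jn nthP'[of j] nthP'[of "Suc j"] adjP[of "j - (n - m)"] unfolding f_def
          by (simp add: Suc_diff_le)
      qed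
    qed
  qed
  have hdP': "hd P' = v" using nthP'[of 0] m unfolding f_def by (simp add: hd_conv_nth lenP' P'_def del: upt_Suc)
  have lastP': "last P' = v"
  proof -
    have "last P' = f n" using nthP'[of n] lenP' by (subst last_conv_nth) auto
    also have "\<dots> = v" using m P0n unfolding f_def by (cases "m = 0") auto
    finally show ?thesis .
  qed
  have "v \<in> set P'" using hdP' lenP' by (metis hd_in_set list.size(3) nat.distinct(1))
  then have cP': "closed_walk_through G r v P'"
    unfolding closed_walk_through_def using walkP' hdP' lastP' lenP' len n_def by auto
  obtain i where i: "Suc i < length P" "e = {P ! i, P ! Suc i}" using e unfolding walk_edges_def by auto
  have fa: "P' ! j = P ! (m + j)" if "j \<le> n - m" for j
    using that nthP'[of j] m(1) unfolding f_def by simp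
  have fb: "P' ! j = P ! (j - (n - m))" if "n - m < j" "j \<le> n" for j
    using that nthP'[of j] unfolding f_def by simp
  have ilt: "i < n" using i lenP by simp
  have "e \<in> walk_edges P'"
  proof (cases "m \<le> i")
    case True
    have 1: "P' ! (i - m) = P ! i" using fa[of "i - m"] True ilt by simp
    have 2: "P' ! Suc (i - m) = P ! Suc i" using fa[of "Suc (i - m)"] True ilt by simp
    have "Suc (i - m) < length P'" using ilt lenP' True by simp
    then show ?thesis using walk_edgesI[of "i - m" P'] 1 2 i(2) by simp
  next
    case False
    show ?thesis
    proof (cases "i = 0")
      case True
      have m0: "0 < m" using False True by simp
      have a1: "m + (n - m) = n" using m(1) by simp
      have 1: "P' ! (n - m) = P ! i" using fa[of "n - m"] True a1 P0n by simp
      have a2: "Suc (n - m) - (n - m) = Suc 0" "Suc (n - m) \<le> n" "n - m < Suc (n - m)" using m0 m(1) by auto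
      have 2: "P' ! Suc (n - m) = P ! Suc i" using fb[OF a2(3) a2(2)] a2(1) True by simp
      have "Suc (n - m) < length P'" using lenP' m0 m(1) by simp
      then show ?thesis using walk_edgesI[of "n - m" P'] 1 2 i(2) by simp
    next
      case F2: False
      have a1: "n - m < i + (n - m)" "i + (n - m) \<le> n" "i + (n - m) - (n - m) = i" using F2 False m(1) by auto
      have 1: "P' ! (i + (n - m)) = P ! i" using fb[OF a1(1) a1(2)] a1(3) by simp
      have a2: "n - m < Suc (i + (n - m))" "Suc (i + (n - m)) \<le> n" "Suc (i + (n - m)) - (n - m) = Suc i" using F2 False m(1) ilt by auto
      have 2: "P' ! Suc (i + (n - m)) = P ! Suc i" using fb[OF a2(1) a2(2)] a2(3) by simp
      have "Suc (i + (n - m)) < length P'" using lenP' a2(2) by simp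
      then show ?thesis using walk_edgesI[of "i + (n - m)" P'] 1 2 i(2) by simp
    qed
  qed
  then show ?thesis using cP' hdP' by blast
qed

lemma verts_delete: "verts (delete_verts G Y) = verts G - Y"
  by (simp add: verts_def delete_verts_def)
lemma edges_delete: "edges (delete_verts G Y) = {e \<in> edges G. \<forall>x\<in>Y. x \<notin> e}"
  by (simp add: edges_def delete_verts_def)
lemma verts_ball: "verts (ball G r v) = {x. \<exists>p. closed_walk_through G r v p \<and> x \<in> set p}"
  by (simp add: verts_def ball_def)
lemma edges_ball: "edges (ball G r v) = {e. \<exists>p. closed_walk_through G r v p \<and> e \<in> walk_edges p}"
  by (simp add: edges_def ball_def)
lemma verts_conn: "verts (connectivity_graph G r v0 v1) = nbhd G {v0, v1}"
  by (simp add: verts_def connectivity_graph_def)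
lemma edges_conn: "edges (connectivity_graph G r v0 v1) =
     {{a, b} | a b. a \<in> nbhd G {v0, v1} \<and> b \<in> nbhd G {v0, v1} \<and> a \<noteq> b \<and>
         (\<exists>v\<in>{v0, v1}. same_component (delete_verts (ball G r v) {v0, v1}) a b)}"
  by (simp add: edges_def connectivity_graph_def)




lemma (in group) central_from_normal:
  assumes hc: "h \<in> carrier G" and hh: "h \<otimes> h = \<one>"
    and h1: "h \<noteq> \<one>" and nor: "generate G {h} \<lhd> G"
    and g: "g \<in> carrier G"
  shows "g \<otimes> h = h \<otimes> g"
proof -
  have invh: "inv h = h" using inv_equality[OF hh hc hc] .
  have sub: "generate G {h} \<subseteq> {\<one>, h}"
  proof
    fix x assume "x \<in> generate G {h}"
    then show "x \<in> {\<one>, h}"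
      by (induct x rule: generate.induct) (auto simp: invh hh hc)
  qed
  have "g \<otimes> h \<otimes> inv g \<in> generate G {h}"
    using normal.inv_op_closed2[OF nor g] generate.incl[of h "{h}" G] by simp
  with sub have "g \<otimes> h \<otimes> inv g = \<one> \<or> g \<otimes> h \<otimes> inv g = h" by auto
  moreover have "g \<otimes> h \<otimes> inv g \<noteq> \<one>"
  proof
    assume "g \<otimes> h \<otimes> inv g = \<one>"
    then have "g \<otimes> h \<otimes> inv g \<otimes> g = g" using g by simp
    then have "g \<otimes> h = g" using g hc by (simp add: m_assoc)
    then show False using h1 g hc by simp
  qed
  ultimately have e: "g \<otimes> h \<otimes> inv g = h" by blast
  have "g \<otimes> h = g \<otimes> h \<otimes> inv g \<otimes> g" using g hc by (simp add: m_assoc)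
  also have "\<dots> = h \<otimes> g" using e by simp
  finally show ?thesis .
qed

locale cay = group \<Gamma> for \<Gamma> :: "('a, 'b) monoid_scheme" (structure) +
  fixes S :: "'a set" and h :: 'a
  assumes S_sub: "S \<subseteq> carrier \<Gamma>" and one_notin: "\<one> \<notin> S"
    and inv_cl: "\<And>s. s \<in> S \<Longrightarrow> inv s \<in> S"
    and hS: "h \<in> S" and hh: "h \<otimes> h = \<one>"
    and central: "\<And>g. g \<in> carrier \<Gamma> \<Longrightarrow> g \<otimes> h = h \<otimes> g"
begin

abbreviation "G \<equiv> cayley_graph \<Gamma> S"
abbreviation "Q \<equiv> contract_h \<Gamma> S h"
abbreviation "X \<equiv> {\<one>, h}"

lemma hc: "h \<in> carrier \<Gamma>" using hS S_sub by auto
lemma h1: "h \<noteq> \<one>" using hS one_notin by auto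

lemma verts_G: "verts G = carrier \<Gamma>" by (simp add: verts_def cayley_graph_def)

lemma adj_G: "adj G a b \<longleftrightarrow> a \<in> carrier \<Gamma> \<and> b \<in> carrier \<Gamma> \<and> a \<noteq> b \<and> (\<exists>s\<in>S. b = a \<otimes> s)"
proof
  assume a: "adj G a b"
  then have ab: "a \<in> carrier \<Gamma>" "b \<in> carrier \<Gamma>" "a \<noteq> b" by (auto simp: adj_def verts_G)
  from a obtain g s where gs: "{a, b} = {g, g \<otimes> s}" "g \<in> carrier \<Gamma>" "s \<in> S"
    by (auto simp: adj_def edges_def cayley_graph_def)
  have sc: "s \<in> carrier \<Gamma>" using gs S_sub by auto
  show "a \<in> carrier \<Gamma> \<and> b \<in> carrier \<Gamma> \<and> a \<noteq> b \<and> (\<exists>s\<in>S. b = a \<otimes> s)"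
  proof (cases "a = g")
    case True
    then have "b = g \<otimes> s" using gs ab by (auto simp: doubleton_eq_iff)
    then show ?thesis using ab gs True by auto
  next
    case False
    then have "a = g \<otimes> s" "b = g" using gs ab by (auto simp: doubleton_eq_iff)
    then have "b = a \<otimes> inv s" using gs sc by (simp add: m_assoc)
    then show ?thesis using ab inv_cl gs by auto
  qed
next
  assume "a \<in> carrier \<Gamma> \<and> b \<in> carrier \<Gamma> \<and> a \<noteq> b \<and> (\<exists>s\<in>S. b = a \<otimes> s)"
  then show "adj G a b" by (auto simp: adj_def verts_def edges_def cayley_graph_def)
qed

lemma hh_cancel: "g \<in> carrier \<Gamma> \<Longrightarrow> g \<otimes> h \<otimes> h = g"
  using hc by (simp add: m_assoc hh)

lemma adj_h: "g \<in> carrier \<Gamma> \<Longrightarrow> adj G g (g \<otimes> h)"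
  using hc h1 hS by (auto simp: adj_G)

lemma shift: "adj G a b \<Longrightarrow> adj G (a \<otimes> h) (b \<otimes> h)"
proof -
  assume "adj G a b"
  then obtain s where s: "a \<in> carrier \<Gamma>" "b \<in> carrier \<Gamma>" "a \<noteq> b" "s \<in> S" "b = a \<otimes> s"
    by (auto simp: adj_G)
  have sc: "s \<in> carrier \<Gamma>" using s S_sub by auto
  have "b \<otimes> h = a \<otimes> h \<otimes> s" using s sc hc central[OF sc] by (simp add: m_assoc)
  moreover have "a \<otimes> h \<noteq> b \<otimes> h" using s hc by simp
  ultimately show ?thesis using s hc sc by (auto simp: adj_G)
qed

lemma verts_Q: "verts Q = {{g, g \<otimes> h} | g. g \<in> carrier \<Gamma>}"
  by (simp add: verts_def contract_h_def Let_def)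

lemma edges_Q: "edges Q = {{A, B} | A B. A \<in> verts Q \<and> B \<in> verts Q \<and> A \<noteq> B \<and>
            (\<exists>a\<in>A. \<exists>b\<in>B. adj G a b)}"
  unfolding verts_Q by (simp add: verts_def edges_def contract_h_def Let_def)

lemma coset: "A \<in> verts Q \<Longrightarrow> a \<in> A \<Longrightarrow> A = {a, a \<otimes> h} \<and> a \<in> carrier \<Gamma>"
proof -
  assume A: "A \<in> verts Q" and a: "a \<in> A"
  then obtain g where g: "A = {g, g \<otimes> h}" "g \<in> carrier \<Gamma>" by (auto simp: verts_Q)
  show ?thesis
  proof (cases "a = g")
    case True then show ?thesis using g by simp
  next
    case False
    then have "a = g \<otimes> h" using a g by auto
    then show ?thesis using g hc hh_cancel[of g] by auto
  qed
qed

lemma adjQ_elems: "adj Q A B \<Longrightarrow> \<exists>a\<in>A. \<exists>b\<in>B. adj G a b"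
proof -
  assume "adj Q A B"
  then obtain A' B' where e: "{A, B} = {A', B'}" "\<exists>a\<in>A'. \<exists>b\<in>B'. adj G a b"
    by (auto simp: adj_def edges_Q)
  then show ?thesis by (auto simp: doubleton_eq_iff intro: adj_sym)
qed

lemma lift_step: "adj Q A B \<Longrightarrow> x \<in> A \<Longrightarrow> \<exists>y\<in>B. adj G x y"
proof -
  assume q: "adj Q A B" and x: "x \<in> A"
  obtain a b where ab: "a \<in> A" "b \<in> B" "adj G a b" using adjQ_elems[OF q] by blast
  have AQ: "A \<in> verts Q" "B \<in> verts Q" using q by (auto simp: adj_def)
  have A: "A = {a, a \<otimes> h}" and B: "B = {b, b \<otimes> h}"
    using coset[OF AQ(1) ab(1)] coset[OF AQ(2) ab(2)] by auto
  show ?thesis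
  proof (cases "x = a")
    case True then show ?thesis using ab by auto
  next
    case False
    then have "x = a \<otimes> h" using x A by auto
    then show ?thesis using shift[OF ab(3)] B by auto
  qed
qed

lemma lift_walk: "walk Q P \<Longrightarrow> x \<in> hd P \<Longrightarrow>
   \<exists>p. walk G p \<and> length p = length P \<and> hd p = x \<and> (\<forall>j<length P. p ! j \<in> P ! j)"
proof (induction P arbitrary: x)
  case Nil then show ?case by (simp add: walk_def)
next
  case (Cons A rest)
  show ?case
  proof (cases rest)
    case Nil
    have "A \<in> verts Q" using Cons.prems Nil by (simp add: walk_single)
    then have "x \<in> carrier \<Gamma>" using coset Cons.prems by auto
    then show ?thesis using Nil Cons.prems by (intro exI[of _ "[x]"]) (auto simp: walk_single verts_G)
  next
    case (Cons B rest')
    have q: "adj Q A B" and w: "walk Q (B # rest')" using Cons.prems Cons by (auto simp: walk_Cons_Cons)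
    obtain y where y: "y \<in> B" "adj G x y" using lift_step[OF q] Cons.prems by auto
    obtain p' where p': "walk G p'" "length p' = length (B # rest')" "hd p' = y"
      "\<forall>j<length (B # rest'). p' ! j \<in> (B # rest') ! j"
      using Cons.IH[of y] w y Cons by auto
    obtain y' p'' where pp: "p' = y' # p''" using p'(2) by (cases p') auto
    have "walk G (x # p')" using p' pp y by (simp add: walk_Cons_Cons)
    moreover have "\<forall>j<length (A # rest). (x # p') ! j \<in> (A # rest) ! j"
    proof (intro allI impI)
      fix j assume "j < length (A # rest)"
      then show "(x # p') ! j \<in> (A # rest) ! j" using p'(4) Cons.prems Cons
        by (cases j) auto
    qed
    ultimately show ?thesis using p' Cons by (intro exI[of _ "x # p'"]) auto
  qed
qed

end



context cay begin

abbreviation "Dg r \<equiv> delete_verts (ball G (r + 2) \<one>) X"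
abbreviation "DQ r \<equiv> delete_verts (ball Q r X) {X}"

lemma edge_adjD:
  assumes c: "closed_walk_through G (r + 2) \<one> W" and i: "Suc i < length W"
    and n1: "W ! i \<notin> X" and n2: "W ! Suc i \<notin> X"
  shows "adj (Dg r) (W ! i) (W ! Suc i)"
proof -
  have w: "walk G W" using c by (simp add: closed_walk_through_def)
  then have a: "adj G (W ! i) (W ! Suc i)" using i unfolding walk_def by blast
  then have ne: "W ! i \<noteq> W ! Suc i" by (simp add: adj_def)
  have m1: "W ! i \<in> set W" "W ! Suc i \<in> set W" using i by auto
  have e: "{W ! i, W ! Suc i} \<in> walk_edges W" using walk_edgesI[OF i] .
  show ?thesis unfolding adj_def verts_delete edges_delete verts_ball edges_ball
    using c m1 e ne n1 n2 by blast
qed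

lemma notX: "A \<in> verts Q \<Longrightarrow> A \<noteq> X \<Longrightarrow> y \<in> A \<Longrightarrow> y \<notin> X"
proof
  assume A: "A \<in> verts Q" "A \<noteq> X" "y \<in> A" "y \<in> X"
  then have "A = {y, y \<otimes> h}" using coset by blast
  moreover have "{y, y \<otimes> h} = X" using A(4) hc hh by auto
  ultimately show False using A(2) by simp
qed

lemma set_cwt_verts: "closed_walk_through H r v p \<Longrightarrow> x \<in> set p \<Longrightarrow> x \<in> verts H"
  unfolding closed_walk_through_def walk_def by blast

lemma key:
  assumes q: "adj (DQ r) A B" and y: "y \<in> A"
  shows "\<exists>z\<in>B. adj (Dg r) y z"
proof -
  have AX: "A \<noteq> X" "B \<noteq> X" and eAB: "{A, B} \<in> edges (ball Q r X)"
    and Ab: "A \<in> verts (ball Q r X)" "B \<in> verts (ball Q r X)"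
    using q by (auto simp: adj_def verts_delete edges_delete)
  obtain P where P: "closed_walk_through Q r X P" "{A, B} \<in> walk_edges P"
    using eAB by (auto simp: edges_ball)
  obtain P' where P': "closed_walk_through Q r X P'" "hd P' = X" "{A, B} \<in> walk_edges P'"
    using rotate_cwt[OF P] by blast
  obtain j where j: "Suc j < length P'" "{A, B} = {P' ! j, P' ! Suc j}"
    using P'(3) unfolding walk_edges_def by blast
  have wP': "walk Q P'" and lP': "last P' = X" and lenP': "length P' - 1 \<le> r"
    using P' by (auto simp: closed_walk_through_def)
  have neP': "P' \<noteq> []" using wP' by (simp add: walk_def)
  have "\<one> \<in> hd P'" using P'(2) by simp
  then obtain p where p: "walk G p" "length p = length P'" "hd p = \<one>" "\<forall>k<length P'. p ! k \<in> P' ! k"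
    using lift_walk[OF wP'] by blast
  have nep: "p \<noteq> []" using p(2) neP' by auto
  have "last p \<in> X"
  proof -
    have "last p = p ! (length p - 1)" using nep by (simp add: last_conv_nth)
    also have "\<dots> \<in> P' ! (length P' - 1)" using p(2,4) neP' by simp
    also have "\<dots> = X" using lP' neP' by (simp add: last_conv_nth)
    finally show ?thesis .
  qed
  define W where "W = (if last p = h then p @ [\<one>] else p @ [h, \<one>])"
  have adj1h: "adj G \<one> h" using adj_h[of \<one>] hc by simp
  have adjh1: "adj G h \<one>" using adj_sym[OF adj1h] .
  have cW: "closed_walk_through G (r + 2) \<one> W" and hW: "h \<in> set W"
  proof -
    have "walk G W \<and> hd W = \<one> \<and> last W = \<one> \<and> length W \<le> length p + 2 \<and> h \<in> set W \<and> \<one> \<in> set W"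
    proof (cases "last p = h")
      case True
      have "walk G (p @ [\<one>])" using walk_snoc[OF p(1)] True adjh1 by simp
      moreover have "h \<in> set p" using True nep by (metis last_in_set)
      ultimately show ?thesis using True nep p(3) by (simp add: W_def)
    next
      case False
      then have l1: "last p = \<one>" using \<open>last p \<in> X\<close> by auto
      have "walk G (p @ [h])" using walk_snoc[OF p(1)] l1 adj1h by simp
      then have "walk G ((p @ [h]) @ [\<one>])" using walk_snoc[of G "p @ [h]" \<one>] adjh1 by simp
      then show ?thesis using False nep p(3) by (simp add: W_def)
    qed
    moreover have "length p - 1 \<le> r" using p(2) lenP' by simp
    ultimately show "closed_walk_through G (r + 2) \<one> W" "h \<in> set W"
      unfolding closed_walk_through_def using nep
      by (auto intro: hd_in_set simp del: hd_append2 hd_append)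
  qed
  have WnthP: "W ! k = p ! k" if "k < length p" for k
    using that by (simp add: W_def nth_append)
  have lenW: "length p \<le> length W" by (simp add: W_def)
  define Wh where "Wh = map (\<lambda>x. x \<otimes> h) W"
  have cWh: "closed_walk_through G (r + 2) \<one> Wh"
  proof -
    have wW: "walk G W" using cW by (simp add: closed_walk_through_def)
    then have neW: "W \<noteq> []" by (simp add: walk_def)
    have "walk G Wh" unfolding Wh_def
      by (rule walk_map[OF wW]) (auto simp: verts_G hc intro: shift)
    moreover have "hd Wh = last Wh" using cW neW
      by (simp add: Wh_def hd_map last_map closed_walk_through_def)
    moreover have "\<one> \<in> set Wh" using hW hh unfolding Wh_def by force
    ultimately show ?thesis using cW unfolding closed_walk_through_def Wh_def by simp
  qed
  have WhnthP: "Wh ! k = p ! k \<otimes> h" if "k < length p" for k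
    using that WnthP lenW by (simp add: Wh_def)
  have jp: "Suc j < length p" using j p(2) by simp
  have PQ: "P' ! j \<in> verts Q" "P' ! Suc j \<in> verts Q"
    using j(1) P'(1) set_cwt_verts[of Q r X P'] by auto
  have PX: "P' ! j \<noteq> X" "P' ! Suc j \<noteq> X" using j(2) AX by (auto simp: doubleton_eq_iff)
  define u where "u = p ! j"
  define w where "w = p ! Suc j"
  have uw: "u \<in> P' ! j" "w \<in> P' ! Suc j" using p(4) j(1) by (auto simp: u_def w_def)
  have cs: "P' ! j = {u, u \<otimes> h}" "P' ! Suc j = {w, w \<otimes> h}"
    using coset[OF PQ(1) uw(1)] coset[OF PQ(2) uw(2)] by auto
  have nX: "u \<notin> X" "u \<otimes> h \<notin> X" "w \<notin> X" "w \<otimes> h \<notin> X"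
    using notX[OF PQ(1) PX(1)] notX[OF PQ(2) PX(2)] cs by auto
  have lW: "Suc j < length W" "Suc j < length Wh" using jp lenW by (auto simp: Wh_def)
  have e1: "adj (Dg r) u w"
    using edge_adjD[OF cW lW(1)] WnthP[of j] WnthP[of "Suc j"] jp nX by (simp add: u_def w_def)
  have e2: "adj (Dg r) (u \<otimes> h) (w \<otimes> h)"
    using edge_adjD[OF cWh lW(2)] WhnthP[of j] WhnthP[of "Suc j"] jp nX by (simp add: u_def w_def)
  have cl: "(y' \<in> P' ! j \<longrightarrow> (\<exists>z\<in>P' ! Suc j. adj (Dg r) y' z)) \<and>
            (y' \<in> P' ! Suc j \<longrightarrow> (\<exists>z\<in>P' ! j. adj (Dg r) y' z))" for y'
    using cs e1 e2 adj_sym[OF e1] adj_sym[OF e2] by auto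
  show ?thesis
  proof (cases "A = P' ! j")
    case True
    then have "B = P' ! Suc j" using j(2) by (auto simp: doubleton_eq_iff)
    then show ?thesis using cl[of y] True y by auto
  next
    case False
    then have "A = P' ! Suc j" "B = P' ! j" using j(2) by (auto simp: doubleton_eq_iff)
    then show ?thesis using cl[of y] y by auto
  qed
qed

lemma lift_path:
  assumes "(adj (DQ r))\<^sup>*\<^sup>* A0 B" "a \<in> A0"
  shows "\<exists>z\<in>B. (adj (Dg r))\<^sup>*\<^sup>* a z"
  using assms
proof (induction rule: rtranclp_induct)
  case base then show ?case by auto
next
  case (step B C)
  then obtain y where "y \<in> B" "(adj (Dg r))\<^sup>*\<^sup>* a y" by auto
  then show ?case using key[OF step(2)] by (meson rtranclp.rtrancl_into_rtrancl)
qed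

end



context cay begin

lemma nb_adj:
  assumes r2: "r \<ge> 2" and a: "a \<in> nbhd G X"
  shows "adj (Dg r) a (a \<otimes> h)"
proof -
  obtain x where x: "x \<in> X" "adj G x a" and aX: "a \<notin> X" using a by (auto simp: nbhd_def)
  have ac: "a \<in> carrier \<Gamma>" and xc: "x \<in> carrier \<Gamma>" using x(2) by (auto simp: adj_G)
  define W where "W = [x, a, a \<otimes> h, x \<otimes> h, x]"
  have "walk G W" unfolding W_def
    using x(2) adj_h[OF ac] shift[OF adj_sym[OF x(2)]] adj_sym[OF adj_h[OF xc]] xc
    by (simp add: walk_Cons_Cons walk_single verts_G)
  moreover have "\<one> \<in> set W" using x(1) hh unfolding W_def by auto
  ultimately have c: "closed_walk_through G (r + 2) \<one> W"
    using r2 unfolding closed_walk_through_def W_def by simp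
  have ahX: "a \<otimes> h \<notin> X"
  proof
    assume "a \<otimes> h \<in> X"
    then have "a \<otimes> h \<otimes> h \<in> {\<one> \<otimes> h, h \<otimes> h}" by auto
    then have "a \<in> X" using hh_cancel[OF ac] hc hh by auto
    then show False using aX by simp
  qed
  have "adj (Dg r) (W ! 1) (W ! Suc 1)"
    by (rule edge_adjD[OF c]) (use aX ahX in \<open>simp_all add: W_def\<close>)
  then show ?thesis by (simp add: W_def)
qed

lemma main:
  assumes r2: "r \<ge> 2" and sep: "local_2_separator G (r + 2) \<one> h"
  shows "local_cutvertex Q r X"
proof (rule ccontr)
  have XQ: "X \<in> verts Q" unfolding verts_Q by (auto intro!: exI[of _ \<one>] simp: hc)
  assume "\<not> local_cutvertex Q r X"
  then have conn: "\<And>A B. A \<in> verts (DQ r) \<Longrightarrow> B \<in> verts (DQ r) \<Longrightarrow> same_component (DQ r) A B"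
    using XQ by (auto simp: local_cutvertex_def disconnected_def)
  from sep obtain a b where ab: "a \<in> nbhd G X" "b \<in> nbhd G X"
    "\<not> same_component (connectivity_graph G (r + 2) \<one> h) a b"
    by (auto simp: local_2_separator_def disconnected_def verts_conn)
  have cv: "{c, c \<otimes> h} \<in> verts (DQ r)" if c: "c \<in> nbhd G X" for c
  proof -
    obtain x where x: "x \<in> X" "adj G x c" and cX: "c \<notin> X" using c by (auto simp: nbhd_def)
    have cc: "c \<in> carrier \<Gamma>" using x(2) by (auto simp: adj_G)
    define C where "C = {c, c \<otimes> h}"
    have CQ: "C \<in> verts Q" unfolding verts_Q C_def using cc by auto
    have CX: "C \<noteq> X" using cX by (auto simp: C_def)
    have "{X, C} \<in> edges Q" unfolding edges_Q using XQ CQ CX x by (auto simp: C_def)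
    then have aXC: "adj Q X C" using XQ CQ CX by (simp add: adj_def)
    have "walk Q [X, C, X]" using aXC adj_sym[OF aXC] XQ by (simp add: walk_Cons_Cons walk_single)
    then have "closed_walk_through Q r X [X, C, X]" using r2 by (simp add: closed_walk_through_def)
    then have "C \<in> verts (ball Q r X)" unfolding verts_ball by force
    then show ?thesis using CX by (simp add: verts_delete C_def)
  qed
  have "(adj (DQ r))\<^sup>*\<^sup>* {a, a \<otimes> h} {b, b \<otimes> h}"
    using conn[OF cv[OF ab(1)] cv[OF ab(2)]] by (simp add: same_component_def)
  then obtain z where z: "z \<in> {b, b \<otimes> h}" "(adj (Dg r))\<^sup>*\<^sup>* a z"
    using lift_path by blast
  have "(adj (Dg r))\<^sup>*\<^sup>* a b"
  proof (cases "z = b")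
    case True then show ?thesis using z by simp
  next
    case False
    then have "z = b \<otimes> h" using z by auto
    then show ?thesis using z(2) adj_sym[OF nb_adj[OF r2 ab(2)]]
      by (meson rtranclp.rtrancl_into_rtrancl)
  qed
  moreover have "a \<in> verts (Dg r)" "b \<in> verts (Dg r)"
    using nb_adj[OF r2 ab(1)] nb_adj[OF r2 ab(2)] by (auto simp: adj_def)
  ultimately have sc: "same_component (Dg r) a b" by (simp add: same_component_def)
  have "same_component (connectivity_graph G (r + 2) \<one> h) a b"
  proof (cases "a = b")
    case True then show ?thesis using ab by (simp add: same_component_def verts_conn)
  next
    case False
    have "{a, b} \<in> edges (connectivity_graph G (r + 2) \<one> h)"
      unfolding edges_conn using ab False sc by blast
    then have "adj (connectivity_graph G (r + 2) \<one> h) a b"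
      using ab False by (simp add: adj_def verts_conn)
    then show ?thesis using ab by (auto simp: same_component_def verts_conn)
  qed
  then show False using ab(3) by simp
qed

end

theorem lemma6p5:
  fixes \<Gamma> :: "('a, 'b) monoid_scheme" and S :: "'a set" and h :: 'a and r :: nat
  assumes "group \<Gamma>"
    and "is_generating_set \<Gamma> S"
    and "h \<in> S"
    and "h \<otimes>\<^bsub>\<Gamma>\<^esub> h = \<one>\<^bsub>\<Gamma>\<^esub>"
    and "generate \<Gamma> {h} \<lhd> \<Gamma>"
    and "r \<ge> 2"
    and "local_2_separator (cayley_graph \<Gamma> S) (r + 2) \<one>\<^bsub>\<Gamma>\<^esub> h"
  shows "local_cutvertex (contract_h \<Gamma> S h) r {\<one>\<^bsub>\<Gamma>\<^esub>, h}"
proof -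
  have gs: "S \<subseteq> carrier \<Gamma>" "\<one>\<^bsub>\<Gamma>\<^esub> \<notin> S" "\<And>s. s \<in> S \<Longrightarrow> inv\<^bsub>\<Gamma>\<^esub> s \<in> S"
    using assms(2) by (auto simp: is_generating_set_def)
  have hc: "h \<in> carrier \<Gamma>" and h1: "h \<noteq> \<one>\<^bsub>\<Gamma>\<^esub>" using gs assms(3) by auto
  have cen: "\<And>g. g \<in> carrier \<Gamma> \<Longrightarrow> g \<otimes>\<^bsub>\<Gamma>\<^esub> h = h \<otimes>\<^bsub>\<Gamma>\<^esub> g"
    using group.central_from_normal[OF assms(1) hc assms(4) h1 assms(5)] by blast
  interpret cay \<Gamma> S h
    by (rule cay.intro[OF assms(1)], unfold_locales) (use gs assms(3,4) cen in auto)
  show ?thesis using main[OF assms(6,7)] .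
qed


end
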